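(* The sets $\{123,2413,3142\}$ and $\{132,2314,3124\}$ are forest-Wilf equivalent.
   Context: A rooted labeled forest on $[n]$ is an unordered forest on $n$ vertices, each component with a distinguished root, with distinct labels from $[n]$. For a pattern (permutation) $\pi$ of $[k]$, an instance is a sequence of vertices $v_1,\dots,v_k$ with $v_i$ a strict ancestor of $v_{i+1}$ whose labels are in the same relative order as $\pi$; a forest avoids a set of patterns if it contains no instance of any of them. Two sets are forest-Wilf equivalent if for every $n\ge 0$ the numbers of rooted labeled forests on $[n]$ avoiding each set are equal. *)

theory Defs
  imports Main
begin

text \<open>A rooted labeled forest on [n] = {1..n} is encoded by its parent map
  par :: nat \<Rightarrow> nat, where par v = 0 means that v is a root.
  This is a bijective encoding of rooted labeled forests on [n].\<close>

definition rooted_forest :: "nat \<Rightarrow> (nat \<Rightarrow> nat) \<Rightarrow> bool" where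
  "rooted_forest n par \<longleftrightarrow>
     (\<forall>v. v \<notin> {1..n} \<longrightarrow> par v = 0) \<and>
     (\<forall>v\<in>{1..n}. par v \<in> {0..n}) \<and>
     (\<forall>v\<in>{1..n}. \<exists>k. (par ^^ k) v = 0)"

definition strict_ancestor :: "(nat \<Rightarrow> nat) \<Rightarrow> nat \<Rightarrow> nat \<Rightarrow> bool" where
  "strict_ancestor par u v \<longleftrightarrow> u \<noteq> 0 \<and> (\<exists>k>0. (par ^^ k) v = u)"

text \<open>A pattern is a permutation of [k], given as the list of its values.\<close>
definition contains_pattern :: "(nat \<Rightarrow> nat) \<Rightarrow> nat list \<Rightarrow> bool" where
  "contains_pattern par \<pi> \<longleftrightarrow>
     (\<exists>vs. length vs = length \<pi> \<and>
        (\<forall>i. Suc i < length vs \<longrightarrow> strict_ancestor par (vs ! i) (vs ! Suc i)) \<and>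
        (\<forall>i<length vs. \<forall>j<length vs. vs ! i < vs ! j \<longleftrightarrow> \<pi> ! i < \<pi> ! j))"

definition avoids :: "(nat \<Rightarrow> nat) \<Rightarrow> nat list set \<Rightarrow> bool" where
  "avoids par S \<longleftrightarrow> (\<forall>\<pi>\<in>S. \<not> contains_pattern par \<pi>)"

definition num_avoiding :: "nat list set \<Rightarrow> nat \<Rightarrow> nat" where
  "num_avoiding S n = card {par. rooted_forest n par \<and> avoids par S}"

definition forest_wilf_equiv :: "nat list set \<Rightarrow> nat list set \<Rightarrow> bool" where
  "forest_wilf_equiv S T \<longleftrightarrow> (\<forall>n. num_avoiding S n = num_avoiding T n)"

end

theory Submission
  imports Defs
begin

definition ae :: "(nat \<Rightarrow> nat) \<Rightarrow> nat \<Rightarrow> nat \<Rightarrow> bool" where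
  "ae par a b \<longleftrightarrow> a = b \<or> strict_ancestor par a b"

definition Hv :: "(nat \<Rightarrow> nat) \<Rightarrow> nat \<Rightarrow> bool" where
  "Hv par v \<longleftrightarrow> (\<exists>a. strict_ancestor par a v \<and> a < v)"

definition sbl :: "(nat \<Rightarrow> nat) \<Rightarrow> nat \<Rightarrow> nat \<Rightarrow> bool" where
  "sbl par x y \<longleftrightarrow> Hv par x \<and> Hv par y \<and>
     (\<exists>t. Hv par t \<and> ae par t x \<and> ae par t y \<and>
        (\<forall>z. ae par t z \<and> (ae par z x \<or> ae par z y) \<longrightarrow> Hv par z))"

definition blob :: "(nat \<Rightarrow> nat) \<Rightarrow> nat \<Rightarrow> nat set" where
  "blob par v = {w. sbl par v w}"

definition rpos :: "nat list \<Rightarrow> nat \<Rightarrow> nat" where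
  "rpos xs v = (THE i. i < length xs \<and> xs ! i = v)"

definition revset :: "nat set \<Rightarrow> nat \<Rightarrow> nat" where
  "revset K v = (let xs = sorted_list_of_set K in xs ! (length xs - Suc (rpos xs v)))"

definition sig :: "(nat \<Rightarrow> nat) \<Rightarrow> nat \<Rightarrow> nat" where
  "sig par v = (if Hv par v then revset (blob par v) v else v)"

definition Phi :: "(nat \<Rightarrow> nat) \<Rightarrow> nat \<Rightarrow> nat" where
  "Phi par = (\<lambda>x. sig par (par (sig par x)))"

section \<open>Reversal inside a finite set\<close>

lemma rpos_nth: "distinct xs \<Longrightarrow> i < length xs \<Longrightarrow> rpos xs (xs ! i) = i"
  unfolding rpos_def
  by (rule the_equality) (auto simp: nth_eq_iff_index_eq)

lemma revset_in:
  assumes "finite K" "v \<in> K"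
  shows "revset K v \<in> K"
proof -
  let ?xs = "sorted_list_of_set K"
  from assms have "v \<in> set ?xs" by simp
  then obtain i where i: "i < length ?xs" "?xs ! i = v" by (auto simp: in_set_conv_nth)
  have "revset K v = ?xs ! (length ?xs - Suc i)"
    unfolding revset_def Let_def using i rpos_nth[of ?xs i] by simp
  moreover have "length ?xs - Suc i < length ?xs" using i by simp
  ultimately show ?thesis using assms by (metis nth_mem set_sorted_list_of_set)
qed

lemma revset_invol:
  assumes "finite K" "v \<in> K"
  shows "revset K (revset K v) = v"
proof -
  let ?xs = "sorted_list_of_set K"
  from assms have "v \<in> set ?xs" by simp
  then obtain i where i: "i < length ?xs" "?xs ! i = v" by (auto simp: in_set_conv_nth)
  have d: "distinct ?xs" by simp
  have r1: "revset K v = ?xs ! (length ?xs - Suc i)"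
    unfolding revset_def Let_def using i rpos_nth[of ?xs i] by simp
  have "rpos ?xs (?xs ! (length ?xs - Suc i)) = length ?xs - Suc i"
    using i d by (intro rpos_nth) auto
  then have "revset K (revset K v) = ?xs ! (length ?xs - Suc (length ?xs - Suc i))"
    unfolding r1 by (simp add: revset_def Let_def)
  also have "length ?xs - Suc (length ?xs - Suc i) = i" using i by simp
  finally show ?thesis using i by simp
qed

lemma revset_rev:
  assumes "finite K" "v \<in> K" "w \<in> K" "v < w"
  shows "revset K w < revset K v"
proof -
  let ?xs = "sorted_list_of_set K"
  have s: "sorted_wrt (<) ?xs" by simp
  from assms have "v \<in> set ?xs" by simp
  then obtain i where i: "i < length ?xs" "?xs ! i = v" by (auto simp: in_set_conv_nth)
  from assms have "w \<in> set ?xs" by simp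
  then obtain j where j: "j < length ?xs" "?xs ! j = w" by (auto simp: in_set_conv_nth)
  have "i < j"
  proof (rule ccontr)
    assume "\<not> i < j"
    then have "j \<le> i" by simp
    then have "?xs ! j \<le> ?xs ! i"
      using s i by (metis le_eq_less_or_eq order.strict_implies_order sorted_wrt_nth_less)
    then show False using i j assms by simp
  qed
  have d: "distinct ?xs" by simp
  have r1: "revset K v = ?xs ! (length ?xs - Suc i)"
    unfolding revset_def Let_def using i rpos_nth[of ?xs i] by simp
  have r2: "revset K w = ?xs ! (length ?xs - Suc j)"
    unfolding revset_def Let_def using j rpos_nth[of ?xs j] by simp
  have "length ?xs - Suc j < length ?xs - Suc i" "length ?xs - Suc i < length ?xs"
    using \<open>i < j\<close> j by auto
  then show ?thesis unfolding r1 r2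
    using s sorted_wrt_nth_less by blast
qed

definition isbase :: "(nat \<Rightarrow> nat) \<Rightarrow> nat \<Rightarrow> nat \<Rightarrow> bool" where
  "isbase par u v \<longleftrightarrow> \<not> Hv par u \<and> strict_ancestor par u v \<and>
     (\<forall>z. strict_ancestor par u z \<longrightarrow> ae par z v \<longrightarrow> Hv par z)"

locale forest =
  fixes n :: nat and par :: "nat \<Rightarrow> nat"
  assumes rf: "rooted_forest n par"
begin

abbreviation anc :: "nat \<Rightarrow> nat \<Rightarrow> bool" where "anc \<equiv> strict_ancestor par"

lemma par0: "par 0 = 0" using rf unfolding rooted_forest_def by auto

lemma par_le: "par x \<le> n"
  using rf unfolding rooted_forest_def by (cases "x \<in> {1..n}") auto

lemma pow0: "(par ^^ k) 0 = 0" by (induction k) (auto simp: par0)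

lemma pow_after:
  assumes "(par ^^ k) v = 0" "k \<le> j" shows "(par ^^ j) v = 0"
proof -
  have "(par ^^ j) v = (par ^^ (j - k)) ((par ^^ k) v)"
    using assms(2) by (metis funpow_add le_add_diff_inverse2 o_apply)
  then show ?thesis using assms(1) pow0 by simp
qed

lemma reach: "\<exists>k. (par ^^ k) v = 0"
proof (cases "v \<in> {1..n}")
  case True then show ?thesis using rf unfolding rooted_forest_def by auto
next
  case False
  then have "par v = 0" using rf unfolding rooted_forest_def by auto
  then have "(par ^^ 1) v = 0" by simp
  then show ?thesis by blast
qed

lemma anc_iff: "anc a b \<longleftrightarrow> a \<noteq> 0 \<and> (\<exists>k>0. (par ^^ k) b = a)"
  by (simp add: strict_ancestor_def)

lemma anc_trans: "anc a b \<Longrightarrow> anc b c \<Longrightarrow> anc a c"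
  unfolding anc_iff
  by (metis add_gr_0 comp_apply funpow_add)

lemma pow_mult_fix: "(par ^^ k) a = a \<Longrightarrow> (par ^^ (k * i)) a = a"
proof (induction i)
  case 0 then show ?case by simp
next
  case (Suc i)
  have "(par ^^ (k * Suc i)) a = (par ^^ k) ((par ^^ (k * i)) a)"
    by (simp add: funpow_add mult.commute)
  then show ?case using Suc by simp
qed

lemma anc_irrefl: "\<not> anc a a"
proof
  assume "anc a a"
  then obtain k where k: "k > 0" "(par ^^ k) a = a" "a \<noteq> 0" unfolding anc_iff by auto
  obtain m where m: "(par ^^ m) a = 0" using reach by blast
  have "(par ^^ (k * m)) a = a" using pow_mult_fix k by blast
  moreover have "m \<le> k * m" using k by simp
  ultimately show False using pow_after[OF m] k by simp
qed

lemma anc_asym: "anc a b \<Longrightarrow> \<not> anc b a"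
  using anc_trans anc_irrefl by blast

lemma anc_total:
  assumes "anc a v" "anc b v" shows "a = b \<or> anc a b \<or> anc b a"
proof -
  obtain i where i: "i > 0" "(par ^^ i) v = a" "a \<noteq> 0" using assms(1) unfolding anc_iff by auto
  obtain j where j: "j > 0" "(par ^^ j) v = b" "b \<noteq> 0" using assms(2) unfolding anc_iff by auto
  consider "i < j" | "i = j" | "j < i" by arith
  then show ?thesis
  proof cases
    case 1
    then have "(par ^^ (j - i)) a = b" using i j
      by (metis funpow_add le_add_diff_inverse2 less_imp_le o_apply)
    then have "anc b a" using 1 j unfolding anc_iff by (metis zero_less_diff)
    then show ?thesis by simp
  next
    case 2 then show ?thesis using i j by simp
  next
    case 3
    then have "(par ^^ (i - j)) b = a" using i j
      by (metis funpow_add le_add_diff_inverse2 less_imp_le o_apply)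
    then have "anc a b" using 3 i unfolding anc_iff by (metis zero_less_diff)
    then show ?thesis by simp
  qed
qed

lemma anc_par: "anc a v \<longleftrightarrow> par v \<noteq> 0 \<and> (a = par v \<or> anc a (par v))"
proof
  assume "anc a v"
  then obtain k where k: "k > 0" "(par ^^ k) v = a" "a \<noteq> 0" unfolding anc_iff by auto
  then obtain k' where k': "k = Suc k'" by (cases k) auto
  have e: "(par ^^ k') (par v) = a" using k k' funpow_Suc_right[of k' par] by (metis comp_apply)
  have "par v \<noteq> 0" using e k pow0 by metis
  moreover have "a = par v \<or> anc a (par v)"
    using e k unfolding anc_iff by (cases k') auto
  ultimately show "par v \<noteq> 0 \<and> (a = par v \<or> anc a (par v))" by simp
next
  assume h: "par v \<noteq> 0 \<and> (a = par v \<or> anc a (par v))"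
  show "anc a v"
  proof (cases "a = par v")
    case True
    then have "(par ^^ 1) v = a" by simp
    then show ?thesis using h True unfolding anc_iff by (metis zero_less_one)
  next
    case False
    then obtain k where k: "k > 0" "(par ^^ k) (par v) = a" "a \<noteq> 0" using h unfolding anc_iff by auto
    then have "(par ^^ Suc k) v = a" using funpow_Suc_right[of k par] by (metis comp_apply)
    then show ?thesis using k unfolding anc_iff by blast
  qed
qed

lemma anc_nz: "anc a b \<Longrightarrow> a \<noteq> 0 \<and> b \<noteq> 0"
  unfolding anc_iff by (metis pow0)

lemma anc_range: "anc a b \<Longrightarrow> a \<in> {1..n} \<and> b \<in> {1..n}"
proof -
  assume h: "anc a b"
  have "par b \<noteq> 0" using h anc_par by blast
  then have b: "b \<in> {1..n}" using rf unfolding rooted_forest_def by auto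
  obtain k where k: "k > 0" "(par ^^ k) b = a" "a \<noteq> 0" using h unfolding anc_iff by auto
  then obtain k' where "k = Suc k'" by (cases k) auto
  then have "a = par ((par ^^ k') b)" using k by simp
  then have "a \<le> n" using par_le by simp
  then show ?thesis using b k by auto
qed

lemma ae_antisym: "ae par a b \<Longrightarrow> ae par b a \<Longrightarrow> a = b"
  unfolding ae_def using anc_asym by blast

lemma ae_trans: "ae par a b \<Longrightarrow> ae par b c \<Longrightarrow> ae par a c"
  unfolding ae_def using anc_trans by blast

lemma ae_total: "ae par a v \<Longrightarrow> ae par b v \<Longrightarrow> ae par a b \<or> ae par b a"
  unfolding ae_def using anc_total by blast

lemma Hv_range: "Hv par v \<Longrightarrow> v \<in> {1..n}"
  unfolding Hv_def using anc_range by blast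

lemma Hv0: "\<not> Hv par 0"
  unfolding Hv_def by simp

lemma nonH_less: "\<not> Hv par v \<Longrightarrow> anc a v \<Longrightarrow> v < a"
  unfolding Hv_def using anc_irrefl by (metis linorder_neqE_nat)

lemma Hv_no_root: "Hv par w \<Longrightarrow> par w \<noteq> 0"
  unfolding Hv_def using anc_par by blast

lemma base_ex:
  assumes hv: "Hv par v" shows "\<exists>u. isbase par u v"
proof -
  let ?P = "\<lambda>j. 0 < j \<and> \<not> Hv par ((par ^^ j) v)"
  obtain k where k: "(par ^^ k) v = 0" using reach by blast
  have v0: "v \<noteq> 0" using hv Hv0 by metis
  then have "k > 0" using k by (cases k) auto
  then have "?P k" using k Hv0 by simp
  define j0 where "j0 = (LEAST j. ?P j)"
  have Pj0: "?P j0" unfolding j0_def by (rule LeastI[of ?P k]) fact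
  have below: "\<And>i. 0 < i \<Longrightarrow> i < j0 \<Longrightarrow> Hv par ((par ^^ i) v)"
    using not_less_Least j0_def by blast
  obtain j1 where j1: "j0 = Suc j1" using Pj0 by (cases j0) auto
  have hw: "Hv par ((par ^^ j1) v)"
  proof (cases j1)
    case 0 then show ?thesis using hv by simp
  next
    case (Suc m) then show ?thesis using below[of j1] j1 by simp
  qed
  have u0: "(par ^^ j0) v \<noteq> 0"
    using Hv_no_root[OF hw] j1 by simp
  let ?u = "(par ^^ j0) v"
  have ancu: "anc ?u v" using u0 Pj0 unfolding anc_iff by blast
  have "\<forall>z. anc ?u z \<longrightarrow> ae par z v \<longrightarrow> Hv par z"
  proof (intro allI impI)
    fix z assume uz: "anc ?u z" and zv: "ae par z v"
    show "Hv par z"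
    proof (cases "z = v")
      case True then show ?thesis using hv by simp
    next
      case False
      then have "anc z v" using zv unfolding ae_def by simp
      then obtain i where i: "i > 0" "(par ^^ i) v = z" "z \<noteq> 0" unfolding anc_iff by auto
      show ?thesis
      proof (cases "i < j0")
        case True then show ?thesis using below i by blast
      next
        case False
        then have "(par ^^ (i - j0)) ?u = z"
          using i by (metis funpow_add le_add_diff_inverse2 not_less o_apply)
        then have "z = ?u \<or> anc z ?u" using i unfolding anc_iff
          by (metis funpow_0 neq0_conv)
        then show ?thesis using uz anc_irrefl anc_asym by blast
      qed
    qed
  qed
  then show ?thesis unfolding isbase_def using Pj0 ancu by blast
qed

lemma base_less:
  assumes "isbase par u k" shows "u < k"
  using assms
proof (induction k rule: less_induct)
  case (less k)
  have nu: "\<not> Hv par u" and uk: "anc u k" and path: "\<forall>z. anc u z \<longrightarrow> ae par z k \<longrightarrow> Hv par z"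
    using less.prems unfolding isbase_def by auto
  have "Hv par k" using path uk unfolding ae_def by blast
  then obtain c where c: "anc c k" "c < k" unfolding Hv_def by blast
  from anc_total[OF c(1) uk] consider "c = u" | "anc c u" | "anc u c" by blast
  then show ?case
  proof cases
    case 1 then show ?thesis using c by simp
  next
    case 2 then show ?thesis using nonH_less[OF nu] c by fastforce
  next
    case 3
    have "isbase par u c" unfolding isbase_def
      using nu 3 path c(1) ae_trans unfolding ae_def by blast
    then have "u < c" using less.IH c by blast
    then show ?thesis using c by simp
  qed
qed

lemma sbl_H: "sbl par x y \<Longrightarrow> Hv par x \<and> Hv par y"
  unfolding sbl_def by simp

lemma sbl_sym: "sbl par x y \<Longrightarrow> sbl par y x"
  unfolding sbl_def by blast

lemma sbl_refl: "Hv par v \<Longrightarrow> sbl par v v"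
  unfolding sbl_def using ae_antisym by (metis ae_def)

lemma sbl_trans:
  assumes "sbl par x y" "sbl par y z" shows "sbl par x z"
proof -
  obtain t1 where t1: "Hv par t1" "ae par t1 x" "ae par t1 y"
    "\<forall>w. ae par t1 w \<and> (ae par w x \<or> ae par w y) \<longrightarrow> Hv par w"
    using assms(1) unfolding sbl_def by blast
  obtain t2 where t2: "Hv par t2" "ae par t2 y" "ae par t2 z"
    "\<forall>w. ae par t2 w \<and> (ae par w y \<or> ae par w z) \<longrightarrow> Hv par w"
    using assms(2) unfolding sbl_def by blast
  have hx: "Hv par x" "Hv par z" using assms sbl_H by auto
  from ae_total[OF t1(3) t2(2)] show ?thesis
  proof
    assume h: "ae par t1 t2"
    have "\<forall>w. ae par t1 w \<and> (ae par w x \<or> ae par w z) \<longrightarrow> Hv par w"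
    proof (intro allI impI)
      fix w assume w: "ae par t1 w \<and> (ae par w x \<or> ae par w z)"
      show "Hv par w"
      proof (cases "ae par w x")
        case True then show ?thesis using w t1 by blast
      next
        case False
        then have wz: "ae par w z" using w by blast
        from ae_total[OF wz t2(3)] show ?thesis
        proof
          assume "ae par w t2"
          then have "ae par w y" using t2(2) ae_trans by blast
          then show ?thesis using w t1 by blast
        next
          assume "ae par t2 w"
          then show ?thesis using wz t2 by blast
        qed
      qed
    qed
    then show ?thesis unfolding sbl_def using hx t1 h t2(3) ae_trans by blast
  next
    assume h: "ae par t2 t1"
    have "\<forall>w. ae par t2 w \<and> (ae par w x \<or> ae par w z) \<longrightarrow> Hv par w"
    proof (intro allI impI)
      fix w assume w: "ae par t2 w \<and> (ae par w x \<or> ae par w z)"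
      show "Hv par w"
      proof (cases "ae par w z")
        case True then show ?thesis using w t2 by blast
      next
        case False
        then have wx: "ae par w x" using w by blast
        from ae_total[OF wx t1(2)] show ?thesis
        proof
          assume "ae par w t1"
          then have "ae par w y" using t1(3) ae_trans by blast
          then show ?thesis using w t2 by blast
        next
          assume "ae par t1 w"
          then show ?thesis using wx t1 by blast
        qed
      qed
    qed
    then show ?thesis unfolding sbl_def using hx t2 h t1(2) ae_trans by blast
  qed
qed

lemma sbl_path:
  assumes "anc x y" "Hv par x" "\<forall>z. anc x z \<longrightarrow> ae par z y \<longrightarrow> Hv par z"
  shows "sbl par x y"
proof -
  have hy: "Hv par y" using assms unfolding ae_def by blast
  have "\<forall>z. ae par x z \<and> (ae par z x \<or> ae par z y) \<longrightarrow> Hv par z"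
    using assms ae_antisym unfolding ae_def by blast
  then show ?thesis unfolding sbl_def using assms hy unfolding ae_def by blast
qed

lemma sbl_pathH:
  assumes "sbl par x y" "anc x z" "ae par z y" shows "Hv par z"
proof -
  obtain t where t: "ae par t x" "\<forall>w. ae par t w \<and> (ae par w x \<or> ae par w y) \<longrightarrow> Hv par w"
    using assms(1) unfolding sbl_def by blast
  have "ae par t z" using t(1) assms(2) ae_trans unfolding ae_def by blast
  then show ?thesis using t assms(3) by blast
qed

lemma sbl_between:
  assumes "anc x y" "anc y z" "sbl par x z" shows "sbl par x y"
proof -
  have "Hv par y" using sbl_pathH[OF assms(3)] assms unfolding ae_def by blast
  have "\<forall>w. anc x w \<longrightarrow> ae par w y \<longrightarrow> Hv par w"
    using sbl_pathH[OF assms(3)] assms(2) ae_trans unfolding ae_def by blast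
  then show ?thesis using sbl_path assms(1) sbl_H[OF assms(3)] by blast
qed

lemma nonH_between:
  assumes "anc x y" "Hv par x" "Hv par y" "\<not> sbl par x y"
  shows "\<exists>p. \<not> Hv par p \<and> anc x p \<and> anc p y"
proof -
  have "\<not> (\<forall>z. anc x z \<longrightarrow> ae par z y \<longrightarrow> Hv par z)"
    using sbl_path assms by blast
  then obtain z where "anc x z" "ae par z y" "\<not> Hv par z" by blast
  then show ?thesis using assms(3) unfolding ae_def by blast
qed

lemma base_share:
  assumes b: "isbase par u v" and s: "sbl par v k" shows "isbase par u k"
proof -
  have nu: "\<not> Hv par u" and uv: "anc u v" and path: "\<forall>z. anc u z \<longrightarrow> ae par z v \<longrightarrow> Hv par z"
    using b unfolding isbase_def by auto
  obtain t where t: "Hv par t" "ae par t v" "ae par t k"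
    "\<forall>w. ae par t w \<and> (ae par w v \<or> ae par w k) \<longrightarrow> Hv par w"
    using s unfolding sbl_def by blast
  have ut: "anc u t"
  proof (cases "t = v")
    case True then show ?thesis using uv by simp
  next
    case False
    then have tv: "anc t v" using t(2) unfolding ae_def by simp
    from anc_total[OF uv tv] consider "u = t" | "anc u t" | "anc t u" by blast
    then show ?thesis
    proof cases
      case 1 then show ?thesis using nu t by simp
    next
      case 2 then show ?thesis .
    next
      case 3
      then have "Hv par u" using t(4) uv unfolding ae_def by blast
      then show ?thesis using nu by simp
    qed
  qed
  have uk: "anc u k" using ut t(3) anc_trans unfolding ae_def by blast
  have "\<forall>z. anc u z \<longrightarrow> ae par z k \<longrightarrow> Hv par z"
  proof (intro allI impI)
    fix z assume uz: "anc u z" and zk: "ae par z k"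
    from ae_total[OF zk t(3)] show "Hv par z"
    proof
      assume "ae par z t"
      then have "ae par z v" using t(2) ae_trans by blast
      then show ?thesis using path uz by blast
    next
      assume "ae par t z" then show ?thesis using t(4) zk by blast
    qed
  qed
  then show ?thesis unfolding isbase_def using nu uk by blast
qed

lemma base_low:
  assumes "isbase par u y" "\<not> Hv par x" "anc x y" shows "ae par x u"
proof -
  have uy: "anc u y" and path: "\<forall>z. anc u z \<longrightarrow> ae par z y \<longrightarrow> Hv par z"
    using assms(1) unfolding isbase_def by auto
  from anc_total[OF assms(3) uy] show ?thesis
    using path assms(2,3) unfolding ae_def by blast
qed

lemma base_lessk: "isbase par u v \<Longrightarrow> sbl par v k \<Longrightarrow> u < k"
  using base_share base_less by blast

lemma blob_sub: "blob par v \<subseteq> {1..n}"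
  unfolding blob_def using sbl_H Hv_range by blast

lemma blob_finite: "finite (blob par v)"
  using blob_sub finite_subset by blast

lemma win2:
  assumes "Hv par b" "anc b v" "\<not> Hv par v" "sbl par b k" shows "v < k"
proof -
  obtain u where u: "isbase par u b" using base_ex assms(1) by blast
  have "anc u v" using u assms(2) anc_trans unfolding isbase_def by blast
  then have "v < u" using nonH_less assms(3) by blast
  moreover have "u < k" using base_lessk u assms(4) by blast
  ultimately show ?thesis by simp
qed

lemma blob_eq: "sbl par v w \<Longrightarrow> blob par w = blob par v"
  unfolding blob_def using sbl_sym sbl_trans by blast

lemma sig_nonH: "\<not> Hv par v \<Longrightarrow> sig par v = v"
  unfolding sig_def by simp

lemma sig_blob: "Hv par v \<Longrightarrow> sbl par v (sig par v)"
proof -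
  assume h: "Hv par v"
  have "v \<in> blob par v" unfolding blob_def using sbl_refl h by simp
  then have "revset (blob par v) v \<in> blob par v" using revset_in blob_finite by blast
  then show ?thesis unfolding sig_def blob_def using h by simp
qed

lemma sig_sig: "sig par (sig par v) = v"
proof (cases "Hv par v")
  case True
  have s: "sbl par v (sig par v)" using sig_blob True .
  then have h2: "Hv par (sig par v)" using sbl_H by blast
  have be: "blob par (sig par v) = blob par v" using blob_eq s by blast
  have "v \<in> blob par v" unfolding blob_def using sbl_refl True by simp
  then show ?thesis unfolding sig_def[of par "sig par v"] using h2 be True
    by (simp add: sig_def revset_invol blob_finite)
next
  case False then show ?thesis by (simp add: sig_nonH)
qed

lemma sig_inj: "sig par x = sig par y \<Longrightarrow> x = y"
  by (metis sig_sig)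

lemma sig_Hv: "Hv par (sig par v) \<longleftrightarrow> Hv par v"
  using sig_blob sbl_H sig_nonH by metis

lemma sig_rev:
  assumes "sbl par x y" shows "sig par x < sig par y \<longleftrightarrow> y < x"
proof -
  have hx: "Hv par x" "Hv par y" using sbl_H assms by auto
  have be: "blob par y = blob par x" using blob_eq assms by blast
  have inx: "x \<in> blob par x" unfolding blob_def using sbl_refl hx by simp
  have iny: "y \<in> blob par x" unfolding blob_def using assms by simp
  have sx: "sig par x = revset (blob par x) x" "sig par y = revset (blob par x) y"
    unfolding sig_def using hx be by auto
  show ?thesis unfolding sx
    using revset_rev[OF blob_finite inx iny] revset_rev[OF blob_finite iny inx]
    by (metis linorder_neqE_nat not_less_iff_gr_or_eq)
qed

lemma sig_sbl: "sbl par x k \<Longrightarrow> sbl par x (sig par k)"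
  using sig_blob sbl_trans sbl_H by blast

lemma sig0: "sig par 0 = 0" using sig_nonH Hv0 by blast

lemma sig_range: "sig par v \<in> {1..n} \<longleftrightarrow> v \<in> {1..n}"
proof (cases "Hv par v")
  case True
  then have "Hv par (sig par v)" using sig_Hv by blast
  then show ?thesis using True Hv_range by blast
qed (simp add: sig_nonH)

end


lemma all3: "(\<forall>i<(3::nat). P i) \<longleftrightarrow> P 0 \<and> P 1 \<and> P 2"
  by (auto simp: less_Suc_eq eval_nat_numeral)

lemma all4: "(\<forall>i<(4::nat). P i) \<longleftrightarrow> P 0 \<and> P 1 \<and> P 2 \<and> P 3"
  by (auto simp: less_Suc_eq numeral_3_eq_3 eval_nat_numeral)

lemma pat3I:
  assumes "strict_ancestor P a b" "strict_ancestor P b c" "length \<pi> = 3"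
    "\<forall>i<3. \<forall>j<3. [a,b,c] ! i < [a,b,c] ! j \<longleftrightarrow> \<pi> ! i < \<pi> ! j"
  shows "contains_pattern P \<pi>"
  unfolding contains_pattern_def
proof (intro exI[of _ "[a,b,c]"] conjI)
  show "\<forall>i. Suc i < length [a,b,c] \<longrightarrow> strict_ancestor P ([a,b,c] ! i) ([a,b,c] ! Suc i)"
    using assms(1,2) by (auto simp: less_Suc_eq)
qed (use assms in auto)

lemma pat4I:
  assumes "strict_ancestor P a b" "strict_ancestor P b c" "strict_ancestor P c d" "length \<pi> = 4"
    "\<forall>i<4. \<forall>j<4. [a,b,c,d] ! i < [a,b,c,d] ! j \<longleftrightarrow> \<pi> ! i < \<pi> ! j"
  shows "contains_pattern P \<pi>"
  unfolding contains_pattern_def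
proof (intro exI[of _ "[a,b,c,d]"] conjI)
  show "\<forall>i. Suc i < length [a,b,c,d] \<longrightarrow> strict_ancestor P ([a,b,c,d] ! i) ([a,b,c,d] ! Suc i)"
    using assms(1,2,3) by (auto simp: less_Suc_eq)
qed (use assms in auto)

lemma p123: "strict_ancestor P a b \<Longrightarrow> strict_ancestor P b c \<Longrightarrow> a < b \<Longrightarrow> b < c \<Longrightarrow>
  contains_pattern P [1,2,3]"
  by (rule pat3I[of P a b c]) (auto simp: all3)

lemma p132: "strict_ancestor P a b \<Longrightarrow> strict_ancestor P b c \<Longrightarrow> a < c \<Longrightarrow> c < b \<Longrightarrow>
  contains_pattern P [1,3,2]"
  by (rule pat3I[of P a b c]) (auto simp: all3)

lemma p2413: "strict_ancestor P a b \<Longrightarrow> strict_ancestor P b c \<Longrightarrow> strict_ancestor P c d \<Longrightarrow>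
  c < a \<Longrightarrow> a < d \<Longrightarrow> d < b \<Longrightarrow> contains_pattern P [2,4,1,3]"
  by (rule pat4I[of P a b c d]) (auto simp: all4)

lemma p3142: "strict_ancestor P a b \<Longrightarrow> strict_ancestor P b c \<Longrightarrow> strict_ancestor P c d \<Longrightarrow>
  b < d \<Longrightarrow> d < a \<Longrightarrow> a < c \<Longrightarrow> contains_pattern P [3,1,4,2]"
  by (rule pat4I[of P a b c d]) (auto simp: all4)

lemma p2314: "strict_ancestor P a b \<Longrightarrow> strict_ancestor P b c \<Longrightarrow> strict_ancestor P c d \<Longrightarrow>
  c < a \<Longrightarrow> a < b \<Longrightarrow> b < d \<Longrightarrow> contains_pattern P [2,3,1,4]"
  by (rule pat4I[of P a b c d]) (auto simp: all4)

lemma p3124: "strict_ancestor P a b \<Longrightarrow> strict_ancestor P b c \<Longrightarrow> strict_ancestor P c d \<Longrightarrow>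
  b < c \<Longrightarrow> c < a \<Longrightarrow> a < d \<Longrightarrow> contains_pattern P [3,1,2,4]"
  by (rule pat4I[of P a b c d]) (auto simp: all4)

lemma get3:
  assumes "contains_pattern P \<pi>" "length \<pi> = 3"
  shows "\<exists>a b c. strict_ancestor P a b \<and> strict_ancestor P b c \<and>
    (\<forall>i<3. \<forall>j<3. [a,b,c] ! i < [a,b,c] ! j \<longleftrightarrow> \<pi> ! i < \<pi> ! j)"
proof -
  obtain vs where vs: "length vs = 3" "\<forall>i. Suc i < length vs \<longrightarrow> strict_ancestor P (vs ! i) (vs ! Suc i)"
    "\<forall>i<length vs. \<forall>j<length vs. vs ! i < vs ! j \<longleftrightarrow> \<pi> ! i < \<pi> ! j"
    using assms unfolding contains_pattern_def by auto
  have e: "vs = [vs!0, vs!1, vs!2]" using vs(1)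
    by (simp add: list_eq_iff_nth_eq all3)
  show ?thesis
    by (rule exI[of _ "vs!0"], rule exI[of _ "vs!1"], rule exI[of _ "vs!2"])
      (use vs e in \<open>auto simp: numeral_eq_Suc\<close>)
qed

lemma get4:
  assumes "contains_pattern P \<pi>" "length \<pi> = 4"
  shows "\<exists>a b c d. strict_ancestor P a b \<and> strict_ancestor P b c \<and> strict_ancestor P c d \<and>
    (\<forall>i<4. \<forall>j<4. [a,b,c,d] ! i < [a,b,c,d] ! j \<longleftrightarrow> \<pi> ! i < \<pi> ! j)"
proof -
  obtain vs where vs: "length vs = 4" "\<forall>i. Suc i < length vs \<longrightarrow> strict_ancestor P (vs ! i) (vs ! Suc i)"
    "\<forall>i<length vs. \<forall>j<length vs. vs ! i < vs ! j \<longleftrightarrow> \<pi> ! i < \<pi> ! j"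
    using assms unfolding contains_pattern_def by auto
  have e: "vs = [vs!0, vs!1, vs!2, vs!3]" using vs(1)
    by (simp add: list_eq_iff_nth_eq all4)
  show ?thesis
    by (rule exI[of _ "vs!0"], rule exI[of _ "vs!1"], rule exI[of _ "vs!2"], rule exI[of _ "vs!3"])
      (use vs e in \<open>auto simp: numeral_eq_Suc\<close>)
qed

lemma g123: "contains_pattern P [1,2,3] \<Longrightarrow>
  \<exists>a b c. strict_ancestor P a b \<and> strict_ancestor P b c \<and> a < b \<and> b < c"
  by (drule get3) (auto simp: all3)

lemma g132: "contains_pattern P [1,3,2] \<Longrightarrow>
  \<exists>a b c. strict_ancestor P a b \<and> strict_ancestor P b c \<and> a < c \<and> c < b"
  by (drule get3) (auto simp: all3)

lemma g2413: "contains_pattern P [2,4,1,3] \<Longrightarrow>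
  \<exists>a b c d. strict_ancestor P a b \<and> strict_ancestor P b c \<and> strict_ancestor P c d \<and>
    c < a \<and> a < d \<and> d < b"
  by (drule get4) (auto simp: all4)

lemma g3142: "contains_pattern P [3,1,4,2] \<Longrightarrow>
  \<exists>a b c d. strict_ancestor P a b \<and> strict_ancestor P b c \<and> strict_ancestor P c d \<and>
    b < d \<and> d < a \<and> a < c"
  by (drule get4) (auto simp: all4)

lemma g2314: "contains_pattern P [2,3,1,4] \<Longrightarrow>
  \<exists>a b c d. strict_ancestor P a b \<and> strict_ancestor P b c \<and> strict_ancestor P c d \<and>
    c < a \<and> a < b \<and> b < d"
  by (drule get4) (auto simp: all4)

lemma g3124: "contains_pattern P [3,1,2,4] \<Longrightarrow>
  \<exists>a b c d. strict_ancestor P a b \<and> strict_ancestor P b c \<and> strict_ancestor P c d \<and>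
    b < c \<and> c < a \<and> a < d"
  by (drule get4) (auto simp: all4)


context forest
begin

lemma blob_common:
  assumes s: "sbl par y k" and b: "isbase par u y"
  shows "\<exists>t. ae par t y \<and> ae par t k \<and> sbl par y t \<and> sbl par t k \<and> anc u t"
proof -
  have nu: "\<not> Hv par u" and uy: "anc u y"
    using b unfolding isbase_def by auto
  obtain t where t: "Hv par t" "ae par t y" "ae par t k"
    "\<forall>w. ae par t w \<and> (ae par w y \<or> ae par w k) \<longrightarrow> Hv par w"
    using s unfolding sbl_def by blast
  have ut: "anc u t"
  proof (cases "t = y")
    case True then show ?thesis using uy by simp
  next
    case False
    then have ty: "anc t y" using t(2) unfolding ae_def by simp
    from anc_total[OF uy ty] consider "u = t" | "anc u t" | "anc t u" by blast
    then show ?thesis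
    proof cases
      case 1 then show ?thesis using nu t by simp
    next
      case 2 then show ?thesis .
    next
      case 3
      then have "Hv par u" using t(4) uy unfolding ae_def by blast
      then show ?thesis using nu by simp
    qed
  qed
  have hy: "Hv par y" "Hv par k" using sbl_H s by auto
  have st1: "sbl par t y"
  proof -
    have "\<forall>z. ae par t z \<and> (ae par z t \<or> ae par z y) \<longrightarrow> Hv par z"
      using t ae_antisym by blast
    then show ?thesis unfolding sbl_def using t hy ae_def by blast
  qed
  have st2: "sbl par t k"
  proof -
    have "\<forall>z. ae par t z \<and> (ae par z t \<or> ae par z k) \<longrightarrow> Hv par z"
      using t ae_antisym by blast
    then show ?thesis unfolding sbl_def using t hy ae_def by blast
  qed
  show ?thesis using t ut st1 st2 sbl_sym by blast
qed

end

section \<open>Class A: avoiding 123, 2413, 3142\<close>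

locale avA = forest +
  assumes nA1: "\<not> contains_pattern par [1,2,3]"
    and nA2: "\<not> contains_pattern par [2,4,1,3]"
    and nA3: "\<not> contains_pattern par [3,1,4,2]"
begin

lemma monoA: "Hv par x \<Longrightarrow> anc x y \<Longrightarrow> y < x"
proof -
  assume hx: "Hv par x" and xy: "anc x y"
  obtain c where c: "anc c x" "c < x" using hx unfolding Hv_def by blast
  have "x \<noteq> y" using xy anc_irrefl by blast
  moreover have "\<not> x < y" using p123[OF c(1) xy c(2)] nA1 by blast
  ultimately show "y < x" by simp
qed

lemma monoA': "sbl par t k \<Longrightarrow> ae par t k \<Longrightarrow> k \<le> t"
  using monoA sbl_H unfolding ae_def by fastforce

lemma win3A:
  assumes nx: "\<not> Hv par x" and xy: "anc x y" and hy: "Hv par y" and yx: "y < x"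
    and s: "sbl par y k"
  shows "k < x"
proof (rule ccontr)
  assume "\<not> k < x"
  moreover have "k \<noteq> x" using nx s sbl_H by blast
  ultimately have kx: "x < k" by simp
  obtain u where u: "isbase par u y" using base_ex hy by blast
  have "ae par x u" using base_low u nx xy by blast
  moreover have uy: "u < y" using base_less u by blast
  ultimately have xu: "anc x u" using yx unfolding ae_def by auto
  obtain t where t: "ae par t y" "ae par t k" "sbl par y t" "sbl par t k" "anc u t"
    using blob_common s u by blast
  have "k \<le> t" using monoA' t by blast
  then have "t \<noteq> y" using kx yx by simp
  then have ty: "anc t y" using t unfolding ae_def by simp
  show False using p3142[OF xu t(5) ty] uy yx kx \<open>k \<le> t\<close> nA3 by simp
qed

lemma win5A:
  assumes nx: "\<not> Hv par x" and xy: "anc x y" and hy: "Hv par y" and yx: "x < y"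
    and s: "sbl par y k"
  shows "x < k"
proof (rule ccontr)
  assume "\<not> x < k"
  moreover have "k \<noteq> x" using nx s sbl_H by blast
  ultimately have kx: "k < x" by simp
  obtain u where u: "isbase par u y" using base_ex hy by blast
  have "ae par x u" using base_low u nx xy by blast
  moreover have uk: "u < k" using base_lessk u s by blast
  ultimately have xu: "anc x u" using kx unfolding ae_def by auto
  obtain t where t: "ae par t y" "ae par t k" "sbl par y t" "sbl par t k" "anc u t"
    using blob_common s u by blast
  have "y \<le> t" using monoA' t sbl_sym by blast
  then have "t \<noteq> k" using kx yx by simp
  then have tk: "anc t k" using t unfolding ae_def by simp
  show False using p3142[OF xu t(5) tk] uk yx kx \<open>y \<le> t\<close> nA3 by simp
qed

lemma diffA:
  assumes xy: "anc x y" and hx: "Hv par x" and hy: "Hv par y" and ns: "\<not> sbl par x y"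
    and sk: "sbl par y k" and sk': "sbl par x k'"
  shows "k < k'"
proof -
  obtain ux where ux: "isbase par ux x" using base_ex hx by blast
  have "ux < k'" using base_lessk ux sk' by blast
  moreover have "k < ux"
  proof (rule ccontr)
    assume "\<not> k < ux"
    moreover have "k \<noteq> ux" using ux sk sbl_H unfolding isbase_def by blast
    ultimately have kux: "ux < k" by simp
    obtain p where p: "\<not> Hv par p" "anc x p" "anc p y" using nonH_between xy hx hy ns by blast
    obtain uy where uy: "isbase par uy y" using base_ex hy by blast
    have "ae par p uy" using base_low uy p by blast
    moreover have "anc uy k" using base_share uy sk unfolding isbase_def by blast
    ultimately have pk: "anc p k" using anc_trans unfolding ae_def by blast
    have uxx: "anc ux x" using ux unfolding isbase_def by blast
    have "p < ux" using nonH_less p(1) anc_trans[OF uxx p(2)] by blast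
    moreover have "k < x" using monoA hx anc_trans[OF p(2) pk] by blast
    ultimately show False using p2413[OF uxx p(2) pk] kux nA2 by simp
  qed
  ultimately show ?thesis by simp
qed

lemma cmpA:
  assumes xy: "anc x y" and ns: "\<not> sbl par x y"
  shows "sig par x < sig par y \<longleftrightarrow> x < y"
proof (cases "Hv par x")
  case hx: True
  show ?thesis
  proof (cases "Hv par y")
    case hy: True
    have "sig par y < sig par x" using diffA[OF xy hx hy ns] sig_blob hx hy by blast
    moreover have "y < x" using diffA[OF xy hx hy ns] sbl_refl hx hy by blast
    ultimately show ?thesis by simp
  next
    case hy: False
    have "y < sig par x" using win2[OF hx xy hy] sig_blob hx by blast
    moreover have "y < x" using win2[OF hx xy hy] sbl_refl hx by blast
    ultimately show ?thesis using sig_nonH hy by simp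
  qed
next
  case hx: False
  show ?thesis
  proof (cases "Hv par y")
    case hy: True
    have "x \<noteq> y" using hx hy by blast
    then consider "x < y" | "y < x" by arith
    then show ?thesis
    proof cases
      case 1 then show ?thesis using win5A[OF hx xy hy 1] sig_blob hy sig_nonH hx by simp
    next
      case 2
      have "sig par y < x" using win3A[OF hx xy hy 2] sig_blob[OF hy] by blast
      then show ?thesis using 2 sig_nonH[OF hx] by simp
    qed
  next
    case hy: False
    then show ?thesis using hx sig_nonH by simp
  qed
qed

lemma orA: "Hv par x \<Longrightarrow> anc x y \<Longrightarrow> (sig par x < sig par y \<longleftrightarrow> sbl par x y)"
  using sig_rev monoA cmpA by (metis order.asym)

lemma orA2: "\<not> Hv par x \<Longrightarrow> anc x y \<Longrightarrow> (sig par x < sig par y \<longleftrightarrow> x < y)"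
  using cmpA sbl_H by blast

end

section \<open>Class B: avoiding 132, 2314, 3124\<close>

locale avB = forest +
  assumes nB1: "\<not> contains_pattern par [1,3,2]"
    and nB2: "\<not> contains_pattern par [2,3,1,4]"
    and nB3: "\<not> contains_pattern par [3,1,2,4]"
begin

lemma monoB: "anc x y \<Longrightarrow> sbl par x y \<Longrightarrow> x < y"
proof (induction y rule: less_induct)
  case (less y)
  have hy: "Hv par y" using less.prems sbl_H by blast
  obtain c where c: "anc c y" "c < y" using hy unfolding Hv_def by blast
  from anc_total[OF c(1) less.prems(1)] consider "c = x" | "anc c x" | "anc x c" by blast
  then show ?case
  proof cases
    case 1 then show ?thesis using c by simp
  next
    case 2
    have "x \<noteq> y" using less.prems anc_irrefl by blast
    moreover have "\<not> y < x" using p132[OF 2 less.prems(1)] c nB1 by blast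
    ultimately show ?thesis by simp
  next
    case 3
    have "sbl par x c" using sbl_between[OF 3 c(1) less.prems(2)] .
    then have "x < c" using less.IH c 3 by blast
    then show ?thesis using c by simp
  qed
qed

lemma monoB': "sbl par t k \<Longrightarrow> ae par t k \<Longrightarrow> t \<le> k"
  using monoB unfolding ae_def by fastforce

lemma win3B:
  assumes nx: "\<not> Hv par x" and xy: "anc x y" and hy: "Hv par y" and yx: "y < x"
    and s: "sbl par y k"
  shows "k < x"
proof (rule ccontr)
  assume "\<not> k < x"
  moreover have "k \<noteq> x" using nx s sbl_H by blast
  ultimately have kx: "x < k" by simp
  obtain u where u: "isbase par u y" using base_ex hy by blast
  have "ae par x u" using base_low u nx xy by blast
  moreover have uy: "u < y" using base_less u by blast
  ultimately have xu: "anc x u" using yx unfolding ae_def by auto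
  obtain t where t: "ae par t y" "ae par t k" "sbl par y t" "sbl par t k" "anc u t"
    using blob_common s u by blast
  have "t \<le> y" using monoB' t sbl_sym by blast
  then have "t \<noteq> k" using kx yx by simp
  then have tk: "anc t k" using t unfolding ae_def by simp
  have "u < t" using base_lessk u t(3) by blast
  then show False using p3124[OF xu t(5) tk] yx kx \<open>t \<le> y\<close> nB3 by simp
qed

lemma win5B:
  assumes nx: "\<not> Hv par x" and xy: "anc x y" and hy: "Hv par y" and yx: "x < y"
    and s: "sbl par y k"
  shows "x < k"
proof (rule ccontr)
  assume "\<not> x < k"
  moreover have "k \<noteq> x" using nx s sbl_H by blast
  ultimately have kx: "k < x" by simp
  obtain u where u: "isbase par u y" using base_ex hy by blast
  have "ae par x u" using base_low u nx xy by blast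
  moreover have uk: "u < k" using base_lessk u s by blast
  ultimately have xu: "anc x u" using kx unfolding ae_def by auto
  obtain t where t: "ae par t y" "ae par t k" "sbl par y t" "sbl par t k" "anc u t"
    using blob_common s u by blast
  have "t \<le> k" using monoB' t by blast
  then have "t \<noteq> y" using kx yx by simp
  then have ty: "anc t y" using t unfolding ae_def by simp
  have "u < t" using base_lessk u t(3) by blast
  then show False using p3124[OF xu t(5) ty] yx kx \<open>t \<le> k\<close> nB3 by simp
qed

lemma diffB:
  assumes xy: "anc x y" and hx: "Hv par x" and hy: "Hv par y" and ns: "\<not> sbl par x y"
    and sk: "sbl par y k" and sk': "sbl par x k'"
  shows "k < k'"
proof -
  obtain ux where ux: "isbase par ux x" using base_ex hx by blast
  have "ux < k'" using base_lessk ux sk' by blast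
  moreover have "k < ux"
  proof (rule ccontr)
    assume "\<not> k < ux"
    moreover have "k \<noteq> ux" using ux sk sbl_H unfolding isbase_def by blast
    ultimately have kux: "ux < k" by simp
    obtain p where p: "\<not> Hv par p" "anc x p" "anc p y" using nonH_between xy hx hy ns by blast
    obtain uy where uy: "isbase par uy y" using base_ex hy by blast
    have "ae par p uy" using base_low uy p by blast
    moreover have "anc uy k" using base_share uy sk unfolding isbase_def by blast
    ultimately have pk: "anc p k" using anc_trans unfolding ae_def by blast
    have uxx: "anc ux x" using ux unfolding isbase_def by blast
    have pux: "p < ux" using nonH_less p(1) anc_trans[OF uxx p(2)] by blast
    have uxlx: "ux < x" using base_less ux by blast
    have "k \<noteq> x" using sk ns sbl_sym by blast
    then consider "x < k" | "k < x" by arith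
    then show False
    proof cases
      case 1 then show False using p2314[OF uxx p(2) pk] pux uxlx nB2 by simp
    next
      case 2 then show False using p132[OF uxx anc_trans[OF p(2) pk]] kux nB1 by simp
    qed
  qed
  ultimately show ?thesis by simp
qed

lemma cmpB:
  assumes xy: "anc x y" and ns: "\<not> sbl par x y"
  shows "sig par x < sig par y \<longleftrightarrow> x < y"
proof (cases "Hv par x")
  case hx: True
  show ?thesis
  proof (cases "Hv par y")
    case hy: True
    have "sig par y < sig par x" using diffB[OF xy hx hy ns] sig_blob hx hy by blast
    moreover have "y < x" using diffB[OF xy hx hy ns] sbl_refl hx hy by blast
    ultimately show ?thesis by simp
  next
    case hy: False
    have "y < sig par x" using win2[OF hx xy hy] sig_blob hx by blast
    moreover have "y < x" using win2[OF hx xy hy] sbl_refl hx by blast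
    ultimately show ?thesis using sig_nonH hy by simp
  qed
next
  case hx: False
  show ?thesis
  proof (cases "Hv par y")
    case hy: True
    have "x \<noteq> y" using hx hy by blast
    then consider "x < y" | "y < x" by arith
    then show ?thesis
    proof cases
      case 1 then show ?thesis using win5B[OF hx xy hy 1] sig_blob hy sig_nonH hx by simp
    next
      case 2
      have "sig par y < x" using win3B[OF hx xy hy 2] sig_blob[OF hy] by blast
      then show ?thesis using 2 sig_nonH[OF hx] by simp
    qed
  next
    case hy: False
    then show ?thesis using hx sig_nonH by simp
  qed
qed

lemma orB: "Hv par x \<Longrightarrow> anc x y \<Longrightarrow> sig par y < sig par x"
proof -
  assume hx: "Hv par x" and xy: "anc x y"
  show ?thesis
  proof (cases "sbl par x y")
    case True
    then have "x < y" using monoB xy by blast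
    moreover have "sig par x \<noteq> sig par y" using sig_inj xy anc_irrefl by blast
    ultimately show ?thesis using sig_rev[OF True] by auto
  next
    case False
    have "y < x"
    proof (cases "Hv par y")
      case True then show ?thesis using diffB[OF xy hx True False] sbl_refl hx True by blast
    next
      case False then show ?thesis using nonH_less xy by blast
    qed
    then show ?thesis using cmpB[OF xy False] sig_inj xy anc_irrefl
      by (metis linorder_neqE_nat order.asym)
  qed
qed

lemma orB2: "\<not> Hv par x \<Longrightarrow> anc x y \<Longrightarrow> (sig par x < sig par y \<longleftrightarrow> x < y)"
  using cmpB sbl_H by blast

end


section \<open>The relabelling map\<close>

context forest
begin

lemma Phi_pow: "(Phi par ^^ k) x = sig par ((par ^^ k) (sig par x))"
proof (induction k)
  case 0 then show ?case by (simp add: sig_sig)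
next
  case (Suc k)
  then show ?case by (simp add: Phi_def sig_sig)
qed

lemma sig_out: "v \<notin> {1..n} \<Longrightarrow> sig par v = v"
  using sig_nonH Hv_range by blast

lemma Phi_rf: "rooted_forest n (Phi par)"
  unfolding rooted_forest_def
proof (intro conjI ballI allI impI)
  fix v assume v: "v \<notin> {1..n}"
  have p: "par v = 0" using v rf unfolding rooted_forest_def by auto
  have "Phi par v = sig par (par v)" unfolding Phi_def using sig_out[OF v] by simp
  then show "Phi par v = 0" using p sig0 by simp
next
  fix v assume v: "v \<in> {1..n}"
  have le: "par (sig par v) \<le> n" using par_le by simp
  show "Phi par v \<in> {0..n}"
  proof (cases "par (sig par v) = 0")
    case True
    then show ?thesis unfolding Phi_def using sig0 by simp
  next
    case False
    then have "par (sig par v) \<in> {1..n}" using le by simp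
    then have "sig par (par (sig par v)) \<in> {1..n}" using sig_range by blast
    then show ?thesis unfolding Phi_def by simp
  qed
next
  fix v assume v: "v \<in> {1..n}"
  obtain k where k: "(par ^^ k) (sig par v) = 0" using reach by blast
  have "(Phi par ^^ k) v = sig par ((par ^^ k) (sig par v))" by (rule Phi_pow)
  then have "(Phi par ^^ k) v = 0" using k sig0 by simp
  then show "\<exists>k. (Phi par ^^ k) v = 0" by blast
qed

lemma Phi_anc: "strict_ancestor (Phi par) a b \<longleftrightarrow> anc (sig par a) (sig par b)"
proof -
  have "a \<noteq> 0 \<longleftrightarrow> sig par a \<noteq> 0" by (metis sig0 sig_sig)
  moreover have "(\<exists>k>0. (Phi par ^^ k) b = a) \<longleftrightarrow> (\<exists>k>0. (par ^^ k) (sig par b) = sig par a)"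
  proof -
    have "\<And>k. sig par ((par ^^ k) (sig par b)) = a \<longleftrightarrow> (par ^^ k) (sig par b) = sig par a"
      by (metis sig_sig)
    then show ?thesis unfolding Phi_pow by simp
  qed
  ultimately show ?thesis unfolding strict_ancestor_def by blast
qed

lemma Phi_ae: "ae (Phi par) a b \<longleftrightarrow> ae par (sig par a) (sig par b)"
  unfolding ae_def Phi_anc using sig_inj by blast

end

locale good = forest +
  assumes cmp: "anc x y \<Longrightarrow> \<not> sbl par x y \<Longrightarrow> (sig par x < sig par y \<longleftrightarrow> x < y)"
begin

lemma Hchar: "Hv par v \<longleftrightarrow> (\<exists>b. anc b v \<and> sig par b < sig par v)"
proof
  assume hv: "Hv par v"
  obtain u where u: "isbase par u v" using base_ex hv by blast
  have nu: "\<not> Hv par u" and uv: "anc u v" using u unfolding isbase_def by auto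
  have "\<not> sbl par u v" using nu sbl_H by blast
  then have "sig par u < sig par v \<longleftrightarrow> u < v" using cmp uv by blast
  then show "\<exists>b. anc b v \<and> sig par b < sig par v" using base_less u uv by blast
next
  assume "\<exists>b. anc b v \<and> sig par b < sig par v"
  then obtain b where b: "anc b v" "sig par b < sig par v" by blast
  show "Hv par v"
  proof (cases "sbl par b v")
    case True then show ?thesis using sbl_H by blast
  next
    case False
    then have "b < v" using cmp b by blast
    then show ?thesis unfolding Hv_def using b by blast
  qed
qed

lemma Phi_Hv: "Hv (Phi par) z \<longleftrightarrow> Hv par (sig par z)"
proof -
  have "Hv (Phi par) z \<longleftrightarrow> (\<exists>a. anc (sig par a) (sig par z) \<and> a < z)"
    unfolding Hv_def Phi_anc by blast
  also have "\<dots> \<longleftrightarrow> (\<exists>b. anc b (sig par z) \<and> sig par b < sig par (sig par z))"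
    by (metis sig_sig)
  also have "\<dots> \<longleftrightarrow> Hv par (sig par z)" using Hchar by blast
  finally show ?thesis .
qed

lemma Phi_sbl: "sbl (Phi par) x y \<longleftrightarrow> sbl par (sig par x) (sig par y)"
proof
  assume "sbl (Phi par) x y"
  then obtain t where t: "Hv (Phi par) x" "Hv (Phi par) y" "Hv (Phi par) t"
    "ae (Phi par) t x" "ae (Phi par) t y"
    "\<forall>z. ae (Phi par) t z \<and> (ae (Phi par) z x \<or> ae (Phi par) z y) \<longrightarrow> Hv (Phi par) z"
    unfolding sbl_def by blast
  have "\<forall>z. ae par (sig par t) z \<and> (ae par z (sig par x) \<or> ae par z (sig par y)) \<longrightarrow> Hv par z"
  proof (intro allI impI)
    fix z assume h: "ae par (sig par t) z \<and> (ae par z (sig par x) \<or> ae par z (sig par y))"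
    then have "ae (Phi par) t (sig par z) \<and> (ae (Phi par) (sig par z) x \<or> ae (Phi par) (sig par z) y)"
      unfolding Phi_ae sig_sig .
    then have "Hv (Phi par) (sig par z)" using t(6) by blast
    then show "Hv par z" unfolding Phi_Hv sig_sig .
  qed
  then show "sbl par (sig par x) (sig par y)" unfolding sbl_def
    using t(1-5) unfolding Phi_Hv Phi_ae by blast
next
  assume "sbl par (sig par x) (sig par y)"
  then obtain t where t: "Hv par (sig par x)" "Hv par (sig par y)" "Hv par t"
    "ae par t (sig par x)" "ae par t (sig par y)"
    "\<forall>z. ae par t z \<and> (ae par z (sig par x) \<or> ae par z (sig par y)) \<longrightarrow> Hv par z"
    unfolding sbl_def by blast
  have "\<forall>z. ae (Phi par) (sig par t) z \<and> (ae (Phi par) z x \<or> ae (Phi par) z y) \<longrightarrow> Hv (Phi par) z"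
    unfolding Phi_ae Phi_Hv sig_sig using t(6) by blast
  moreover have "Hv (Phi par) (sig par t)" "ae (Phi par) (sig par t) x" "ae (Phi par) (sig par t) y"
    unfolding Phi_ae Phi_Hv sig_sig using t by auto
  moreover have "Hv (Phi par) x" "Hv (Phi par) y" unfolding Phi_Hv using t by auto
  ultimately show "sbl (Phi par) x y" unfolding sbl_def by blast
qed

lemma Phi_blob: "blob (Phi par) z = blob par (sig par z)"
proof -
  have "\<And>w. sbl par (sig par z) (sig par w) \<longleftrightarrow> sbl par (sig par z) w"
    by (metis sig_sbl sig_sig)
  then show ?thesis unfolding blob_def Phi_sbl by simp
qed

lemma Phi_sig: "sig (Phi par) z = sig par z"
proof (cases "Hv par (sig par z)")
  case True
  let ?y = "sig par z"
  have z: "z = sig par ?y" by (simp add: sig_sig)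
  have yin: "?y \<in> blob par ?y" unfolding blob_def using sbl_refl True by simp
  have zr: "z = revset (blob par ?y) ?y"
    using z True unfolding sig_def[of par ?y] by simp
  have "revset (blob par ?y) z = ?y"
    using revset_invol[OF blob_finite yin] zr by metis
  then show ?thesis unfolding sig_def[of "Phi par"] Phi_Hv Phi_blob using True by simp
next
  case False
  then have "sig par z = z" by (metis sig_Hv sig_nonH)
  then show ?thesis unfolding sig_def[of "Phi par"] Phi_Hv using False by simp
qed

lemma Phi_Phi: "Phi (Phi par) = par"
proof
  fix x
  show "Phi (Phi par) x = par x"
    unfolding Phi_def[of "Phi par"] Phi_sig by (simp add: Phi_def sig_sig)
qed

end

sublocale avA \<subseteq> good
  by unfold_locales (rule cmpA)

sublocale avB \<subseteq> good
  by unfold_locales (rule cmpB)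

context avA
begin

lemma trA132: "\<not> contains_pattern (Phi par) [1,3,2]"
proof
  assume "contains_pattern (Phi par) [1,3,2]"
  then obtain a b c where abc: "strict_ancestor (Phi par) a b" "strict_ancestor (Phi par) b c" "a < c" "c < b"
    using g132 by blast
  define x1 where "x1 = sig par a"
  define x2 where "x2 = sig par b"
  define x3 where "x3 = sig par c"
  have e: "a = sig par x1" "b = sig par x2" "c = sig par x3" unfolding x1_def x2_def x3_def by (simp_all add: sig_sig)
  have a12: "anc x1 x2" and a23: "anc x2 x3" using abc unfolding Phi_anc x1_def x2_def x3_def by auto
  have a13: "anc x1 x3" using anc_trans a12 a23 by blast
  have o13: "sig par x1 < sig par x3" and o32: "sig par x3 < sig par x2" using abc e by auto
  show False
  proof (cases "Hv par x1")
    case True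
    have "sbl par x1 x2" using orA[OF True a12] o13 o32 by simp
    moreover have "sbl par x1 x3" using orA[OF True a13] o13 by simp
    ultimately have "sbl par x2 x3" using sbl_sym sbl_trans by blast
    then have "sig par x2 < sig par x3" using orA a23 sbl_H by blast
    then show False using o32 by simp
  next
    case False
    have l12: "x1 < x2" using orA2[OF False a12] o13 o32 by simp
    have l13: "x1 < x3" using orA2[OF False a13] o13 by simp
    have h2: "Hv par x2" unfolding Hv_def using a12 l12 by blast
    have h3: "Hv par x3" unfolding Hv_def using a13 l13 by blast
    have ns: "\<not> sbl par x2 x3" using orA[OF h2 a23] o32 by simp
    obtain p where p: "\<not> Hv par p" "anc x2 p" "anc p x3" using nonH_between a23 h2 h3 ns by blast
    have "x3 < x2" using monoA h2 a23 by blast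
    moreover have "p < x1" using nonH_less p(1) anc_trans[OF a12 p(2)] by blast
    ultimately show False using p2413[OF a12 p(2) p(3)] l13 nA2 by simp
  qed
qed

lemma trA2314: "\<not> contains_pattern (Phi par) [2,3,1,4]"
proof
  assume "contains_pattern (Phi par) [2,3,1,4]"
  then obtain a b c d where abc: "strict_ancestor (Phi par) a b" "strict_ancestor (Phi par) b c"
    "strict_ancestor (Phi par) c d" "c < a" "a < b" "b < d"
    using g2314 by blast
  define x1 where "x1 = sig par a"
  define x2 where "x2 = sig par b"
  define x3 where "x3 = sig par c"
  define x4 where "x4 = sig par d"
  have e: "a = sig par x1" "b = sig par x2" "c = sig par x3" "d = sig par x4"
    unfolding x1_def x2_def x3_def x4_def by (simp_all add: sig_sig)
  have a12: "anc x1 x2" and a23: "anc x2 x3" and a34: "anc x3 x4"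
    using abc unfolding Phi_anc x1_def x2_def x3_def x4_def by auto
  have a13: "anc x1 x3" and a14: "anc x1 x4" and a24: "anc x2 x4"
    using anc_trans a12 a23 a34 by blast+
  have o: "sig par x3 < sig par x1" "sig par x1 < sig par x2" "sig par x2 < sig par x4"
    using abc e by auto
  show False
  proof (cases "Hv par x1")
    case True
    have "sbl par x1 x4" using orA[OF True a14] o by simp
    then have "sbl par x1 x3" using sbl_between a13 a34 by blast
    then show False using orA[OF True a13] o by simp
  next
    case False
    have l12: "x1 < x2" using orA2[OF False a12] o by simp
    have h2: "Hv par x2" unfolding Hv_def using a12 l12 by blast
    have "sbl par x2 x4" using orA[OF h2 a24] o by simp
    then have "sbl par x2 x3" using sbl_between a23 a34 by blast
    then show False using orA[OF h2 a23] o by simp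
  qed
qed

lemma trA3124: "\<not> contains_pattern (Phi par) [3,1,2,4]"
proof
  assume "contains_pattern (Phi par) [3,1,2,4]"
  then obtain a b c d where abc: "strict_ancestor (Phi par) a b" "strict_ancestor (Phi par) b c"
    "strict_ancestor (Phi par) c d" "b < c" "c < a" "a < d"
    using g3124 by blast
  define x1 where "x1 = sig par a"
  define x2 where "x2 = sig par b"
  define x3 where "x3 = sig par c"
  define x4 where "x4 = sig par d"
  have e: "a = sig par x1" "b = sig par x2" "c = sig par x3" "d = sig par x4"
    unfolding x1_def x2_def x3_def x4_def by (simp_all add: sig_sig)
  have a12: "anc x1 x2" and a23: "anc x2 x3" and a34: "anc x3 x4"
    using abc unfolding Phi_anc x1_def x2_def x3_def x4_def by auto
  have a13: "anc x1 x3" and a14: "anc x1 x4" and a24: "anc x2 x4"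
    using anc_trans a12 a23 a34 by blast+
  have o: "sig par x2 < sig par x3" "sig par x3 < sig par x1" "sig par x1 < sig par x4"
    using abc e by auto
  show False
  proof (cases "Hv par x1")
    case True
    have "sbl par x1 x4" using orA[OF True a14] o by simp
    then have "sbl par x1 x2" using sbl_between a12 a24 by blast
    then show False using orA[OF True a12] o by simp
  next
    case False
    have l31: "x3 < x1" using orA2[OF False a13] o anc_irrefl a13
      by (metis linorder_neqE_nat order.asym)
    have l14: "x1 < x4" using orA2[OF False a14] o by simp
    have h3: "Hv par x3"
    proof (cases "Hv par x2")
      case True
      then show ?thesis using orA[OF True a23] o sbl_H by blast
    next
      case False
      have "x2 < x3" using orA2[OF False a23] o by simp
      then show ?thesis unfolding Hv_def using a23 by blast
    qed
    have "sbl par x3 x4" using orA[OF h3 a34] o by simp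
    then have "x4 < x3" using monoA h3 a34 by blast
    then show False using l31 l14 by simp
  qed
qed

lemma PhiA: "avoids (Phi par) {[1,3,2], [2,3,1,4], [3,1,2,4]}"
  unfolding avoids_def using trA132 trA2314 trA3124 by blast

end

context avB
begin

lemma trB123: "\<not> contains_pattern (Phi par) [1,2,3]"
proof
  assume "contains_pattern (Phi par) [1,2,3]"
  then obtain a b c where abc: "strict_ancestor (Phi par) a b" "strict_ancestor (Phi par) b c" "a < b" "b < c"
    using g123 by blast
  define x1 where "x1 = sig par a"
  define x2 where "x2 = sig par b"
  define x3 where "x3 = sig par c"
  have e: "a = sig par x1" "b = sig par x2" "c = sig par x3" unfolding x1_def x2_def x3_def by (simp_all add: sig_sig)
  have a12: "anc x1 x2" and a23: "anc x2 x3" using abc unfolding Phi_anc x1_def x2_def x3_def by auto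
  have o: "sig par x1 < sig par x2" "sig par x2 < sig par x3" using abc e by auto
  show False
  proof (cases "Hv par x1")
    case True then show False using orB[OF True a12] o by simp
  next
    case False
    have "x1 < x2" using orB2[OF False a12] o by simp
    then have "Hv par x2" unfolding Hv_def using a12 by blast
    then show False using orB a23 o by fastforce
  qed
qed

lemma trB2413: "\<not> contains_pattern (Phi par) [2,4,1,3]"
proof
  assume "contains_pattern (Phi par) [2,4,1,3]"
  then obtain a b c d where abc: "strict_ancestor (Phi par) a b" "strict_ancestor (Phi par) b c"
    "strict_ancestor (Phi par) c d" "c < a" "a < d" "d < b"
    using g2413 by blast
  define x1 where "x1 = sig par a"
  define x2 where "x2 = sig par b"
  define x3 where "x3 = sig par c"
  define x4 where "x4 = sig par d"
  have e: "a = sig par x1" "b = sig par x2" "c = sig par x3" "d = sig par x4"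
    unfolding x1_def x2_def x3_def x4_def by (simp_all add: sig_sig)
  have a12: "anc x1 x2" and a23: "anc x2 x3" and a34: "anc x3 x4"
    using abc unfolding Phi_anc x1_def x2_def x3_def x4_def by auto
  have a13: "anc x1 x3" and a14: "anc x1 x4" and a24: "anc x2 x4"
    using anc_trans a12 a23 a34 by blast+
  have o: "sig par x3 < sig par x1" "sig par x1 < sig par x4" "sig par x4 < sig par x2"
    using abc e by auto
  show False
  proof (cases "Hv par x1")
    case True then show False using orB[OF True a12] o by simp
  next
    case False
    have l12: "x1 < x2" using orB2[OF False a12] o by simp
    have l14: "x1 < x4" using orB2[OF False a14] o by simp
    have h2: "Hv par x2" unfolding Hv_def using a12 l12 by blast
    have h4: "Hv par x4" unfolding Hv_def using a14 l14 by blast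
    have n3: "\<not> Hv par x3" using orB[OF _ a34] o by fastforce
    have ns: "\<not> sbl par x2 x4"
    proof
      assume "sbl par x2 x4"
      then have "sbl par x2 x3" using sbl_between a23 a34 by blast
      then show False using n3 sbl_H by blast
    qed
    have "x4 < x2" using diffB[OF a24 h2 h4 ns] sbl_refl h2 h4 by blast
    then show False using p132[OF a12 a24] l14 nB1 by simp
  qed
qed

lemma trB3142: "\<not> contains_pattern (Phi par) [3,1,4,2]"
proof
  assume "contains_pattern (Phi par) [3,1,4,2]"
  then obtain a b c d where abc: "strict_ancestor (Phi par) a b" "strict_ancestor (Phi par) b c"
    "strict_ancestor (Phi par) c d" "b < d" "d < a" "a < c"
    using g3142 by blast
  define x1 where "x1 = sig par a"
  define x2 where "x2 = sig par b"
  define x3 where "x3 = sig par c"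
  define x4 where "x4 = sig par d"
  have e: "a = sig par x1" "b = sig par x2" "c = sig par x3" "d = sig par x4"
    unfolding x1_def x2_def x3_def x4_def by (simp_all add: sig_sig)
  have a12: "anc x1 x2" and a23: "anc x2 x3" and a34: "anc x3 x4"
    using abc unfolding Phi_anc x1_def x2_def x3_def x4_def by auto
  have a13: "anc x1 x3" and a14: "anc x1 x4" and a24: "anc x2 x4"
    using anc_trans a12 a23 a34 by blast+
  have o: "sig par x2 < sig par x4" "sig par x4 < sig par x1" "sig par x1 < sig par x3"
    using abc e by auto
  show False
  proof (cases "Hv par x1")
    case True then show False using orB[OF True a13] o by simp
  next
    case False
    have l13: "x1 < x3" using orB2[OF False a13] o by simp
    have l41: "x4 < x1" using orB2[OF False a14] o anc_irrefl a14
      by (metis linorder_neqE_nat order.asym)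
    have n2: "\<not> Hv par x2" using orB[OF _ a24] o by fastforce
    have l24: "x2 < x4" using orB2[OF n2 a24] o by simp
    show False using p132[OF a23 a34] l24 l41 l13 nB1 by simp
  qed
qed

lemma PhiB: "avoids (Phi par) {[1,2,3], [2,4,1,3], [3,1,4,2]}"
  unfolding avoids_def using trB123 trB2413 trB3142 by blast

end

theorem corollary3p19:
  shows "forest_wilf_equiv {[1,2,3], [2,4,1,3], [3,1,4,2]} {[1,3,2], [2,3,1,4], [3,1,2,4]}"
  unfolding forest_wilf_equiv_def num_avoiding_def
proof
  fix n
  let ?A = "{par. rooted_forest n par \<and> avoids par {[1,2,3], [2,4,1,3], [3,1,4,2]}}"
  let ?B = "{par. rooted_forest n par \<and> avoids par {[1,3,2], [2,3,1,4], [3,1,2,4]}}"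
  have hA: "Phi par \<in> ?B \<and> Phi (Phi par) = par" if "par \<in> ?A" for par
  proof -
    interpret avA n par
      using that by unfold_locales (auto simp: avoids_def)
    show ?thesis using Phi_rf PhiA Phi_Phi by simp
  qed
  have hB: "Phi par \<in> ?A \<and> Phi (Phi par) = par" if "par \<in> ?B" for par
  proof -
    interpret avB n par
      using that by unfold_locales (auto simp: avoids_def)
    show ?thesis using Phi_rf PhiB Phi_Phi by simp
  qed
  have "bij_betw Phi ?A ?B"
    by (rule bij_betw_byWitness[where f' = Phi]) (use hA hB in auto)
  then show "card ?A = card ?B" by (rule bij_betw_same_card)
qed

end
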